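(* Let $n\ge0$ be an integer and \[ I_{m,n}^{(2)}=\int_0^\pi \cos(2m\theta)\,\log\big(C_n^{(2)}(\cos\theta)\big)^2\,\mathrm{d}\theta . \] Then for every integer $m$ with $1\le m\le n+2$, \[ I_{m,n}^{(2)}=\frac{\pi}{m}\left[\,3-\left(\frac{n+3}{n+1}\right)^{m}\right]+\pi\,\frac{n+3}{n+1}\,\delta_{m,n+2}, \] where $\delta$ is the Kronecker delta.
   Context: $C_n^{(2)}(x)$ denotes the Gegenbauer polynomial of degree $n$ and parameter $2$, defined by $(1-2xt+t^2)^{-2}=\sum_{n\ge0}C_n^{(2)}(x)t^n$. *)

theory Defs
  imports "HOL-Analysis.Analysis" "HOL-Computational_Algebra.Formal_Power_Series"
begin

definition gegenbauer2 :: "nat \<Rightarrow> real \<Rightarrow> real" where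
  "gegenbauer2 n x =
     fps_nth (inverse ((1 - fps_const (2 * x) * fps_X + fps_X ^ 2) ^ 2 :: real fps)) n"

end

theory Submission
  imports Defs "HOL-Real_Asymp.Real_Asymp" "HOL-Computational_Algebra.Polynomial_FPS"
begin


lemma sin_cot_sum:
  fixes t :: real
  assumes "k \<ge> 1"
  shows "sin (real k * t) * sin t = (1 - cos t) * (1 + cos (real k * t) + 2 * (\<Sum>j=1..<k. cos (real j * t)))"
  using assms
proof (induction k rule: nat_induct_at_least)
  case base
  then show ?case by (simp add: sin_squared_eq algebra_simps power2_eq_square)
next
  case (Suc k)
  have s: "(\<Sum>j=1..<Suc k. cos (real j * t)) = (\<Sum>j=1..<k. cos (real j * t)) + cos (real k * t)"
    using Suc.hyps by simp
  have e1: "sin (real (Suc k) * t) = sin (real k * t) * cos t + cos (real k * t) * sin t"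
    by (simp add: distrib_right sin_add)
  have e2: "cos (real (Suc k) * t) = cos (real k * t) * cos t - sin (real k * t) * sin t"
    by (simp add: distrib_right cos_add)
  show ?case
    unfolding s e1 e2 using Suc.IH sin_cos_squared_add[of t]
    by algebra
qed



lemma sin_cot_sum2:
  fixes t :: real
  assumes "k \<ge> 1"
  shows "(1 - cos (real k * t)) * sin t = (1 - cos t) * (sin (real k * t) + 2 * (\<Sum>j=1..<k. sin (real j * t)))"
  using assms
proof (induction k rule: nat_induct_at_least)
  case base
  then show ?case by (simp add: algebra_simps)
next
  case (Suc k)
  have s: "(\<Sum>j=1..<Suc k. sin (real j * t)) = (\<Sum>j=1..<k. sin (real j * t)) + sin (real k * t)"
    using Suc.hyps by simp
  have e1: "sin (real (Suc k) * t) = sin (real k * t) * cos t + cos (real k * t) * sin t"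
    by (simp add: distrib_right sin_add)
  have e2: "cos (real (Suc k) * t) = cos (real k * t) * cos t - sin (real k * t) * sin t"
    by (simp add: distrib_right cos_add)
  show ?case
    unfolding s e1 e2 using Suc.IH sin_cos_squared_add[of t]
    by algebra
qed

lemma abs_sin_mult_le: "\<bar>sin (real n * x)\<bar> \<le> real n * \<bar>sin x\<bar>"
proof (induction n)
  case 0 then show ?case by simp
next
  case (Suc n)
  have "\<bar>sin (real (Suc n) * x)\<bar> = \<bar>sin (real n * x) * cos x + cos (real n * x) * sin x\<bar>"
    by (simp add: distrib_right sin_add algebra_simps)
  also have "\<dots> \<le> \<bar>sin (real n * x)\<bar> * \<bar>cos x\<bar> + \<bar>cos (real n * x)\<bar> * \<bar>sin x\<bar>"
    by (metis abs_mult abs_triangle_ineq)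
  also have "\<dots> \<le> \<bar>sin (real n * x)\<bar> + \<bar>sin x\<bar>"
    by (intro add_mono mult_left_le mult_left_le_one_le) (auto intro: abs_cos_le_one)
  finally show ?case using Suc.IH by (simp add: algebra_simps)
qed

lemma w_tendsto: "((\<lambda>y::real. y * ln (4 * y^2)) \<longlongrightarrow> 0) (at 0)"
  by real_asymp



definition gL :: "real \<Rightarrow> real" where "gL t = ln (2 - 2 * cos t)"
definition P1 :: "nat \<Rightarrow> real \<Rightarrow> real" where
  "P1 k t = t + sin (real k * t) / real k + 2 * (\<Sum>j=1..<k. sin (real j * t) / real j)"
definition P2 :: "nat \<Rightarrow> real \<Rightarrow> real" where
  "P2 k t = - cos (real k * t) / real k - 2 * (\<Sum>j=1..<k. cos (real j * t) / real j)"
definition Af :: "nat \<Rightarrow> real \<Rightarrow> real" where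
  "Af k t = (sin (real k * t) * gL t - P1 k t) / real k"
definition Bf :: "nat \<Rightarrow> real \<Rightarrow> real" where
  "Bf k t = ((1 - cos (real k * t)) * gL t - P2 k t) / real k"
definition Phi :: "nat \<Rightarrow> real \<Rightarrow> real \<Rightarrow> real" where
  "Phi k a x = cos (real k * a) * Af k (x - a) - sin (real k * a) * Bf k (x - a)"

lemma gL_deriv:
  assumes "cos t \<noteq> 1"
  shows "(gL has_real_derivative sin t / (1 - cos t)) (at t)"
proof -
  have pos: "2 - 2 * cos t > 0" using assms cos_le_one[of t] by linarith
  have "((\<lambda>t. ln (2 - 2 * cos t)) has_real_derivative (2 * sin t) / (2 - 2 * cos t)) (at t)"
    by (rule derivative_eq_intros refl | use pos in simp)+
  moreover have "(2 * sin t) / (2 - 2 * cos t) = sin t / (1 - cos t)"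
  proof -
    have "1 - cos t \<noteq> 0" using assms by simp
    then show ?thesis by (simp add: divide_simps)
  qed
  ultimately show ?thesis unfolding gL_def[abs_def] by simp
qed

lemma P1_deriv:
  assumes "k \<ge> 1"
  shows "(P1 k has_real_derivative 1 + cos (real k * t) + 2 * (\<Sum>j=1..<k. cos (real j * t))) (at t)"
  unfolding P1_def[abs_def] using assms
  by (auto intro!: derivative_eq_intros sum.cong simp: field_simps sum_negf)

lemma P2_deriv:
  assumes "k \<ge> 1"
  shows "(P2 k has_real_derivative sin (real k * t) + 2 * (\<Sum>j=1..<k. sin (real j * t))) (at t)"
  unfolding P2_def[abs_def] using assms
  by (auto intro!: derivative_eq_intros sum.cong simp: field_simps sum_negf)


lemma Af_deriv:
  assumes "k \<ge> 1" "cos t \<noteq> 1"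
  shows "(Af k has_real_derivative cos (real k * t) * gL t) (at t)"
proof -
  have nz: "1 - cos t \<noteq> 0" using assms by simp
  have key: "sin t / (1 - cos t) * sin (real k * t) = 1 + cos (real k * t) + 2 * (\<Sum>j=1..<k. cos (real j * t))"
    using sin_cot_sum[OF assms(1), of t] nz by (simp add: divide_simps) (simp add: algebra_simps)
  show ?thesis
    unfolding Af_def[abs_def]
    apply (rule DERIV_cong)
     apply (rule derivative_eq_intros gL_deriv[OF assms(2)] P1_deriv[OF assms(1)] refl)+
    using assms(1) apply simp
     apply (rule refl)
    apply (simp only: key)
    using assms(1) by (simp add: field_simps)
qed

lemma Bf_deriv:
  assumes "k \<ge> 1" "cos t \<noteq> 1"
  shows "(Bf k has_real_derivative sin (real k * t) * gL t) (at t)"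
proof -
  have nz: "1 - cos t \<noteq> 0" using assms by simp
  have key: "sin t / (1 - cos t) * (1 - cos (real k * t)) = sin (real k * t) + 2 * (\<Sum>j=1..<k. sin (real j * t))"
    using sin_cot_sum2[OF assms(1), of t] nz by (simp add: divide_simps) (simp add: algebra_simps)
  show ?thesis
    unfolding Bf_def[abs_def]
    apply (rule DERIV_cong)
     apply (rule derivative_eq_intros gL_deriv[OF assms(2)] P2_deriv[OF assms(1)] refl)+
    using assms(1) apply simp
     apply (rule refl)
    apply (simp only: key)
    using assms(1) by (simp add: field_simps)
qed



lemma gL_alt: "gL t = ln (4 * (sin (t/2))^2)"
proof -
  have "cos t = 1 - 2 * (sin (t/2))^2" using cos_double_sin[of "t/2"] by simp
  then show ?thesis unfolding gL_def by simp
qed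

lemma W_isCont: "isCont (\<lambda>y::real. y * ln (4 * y^2)) 0"
  using w_tendsto unfolding isCont_def by simp

lemma isCont_h_gL:
  fixes h :: "real \<Rightarrow> real"
  assumes bnd: "\<And>t. \<bar>h t\<bar> \<le> C * \<bar>sin (t/2)\<bar>" and hc: "isCont h t0"
  shows "isCont (\<lambda>t. h t * gL t) t0"
proof (cases "cos t0 = 1")
  case False
  have "isCont gL t0" using gL_deriv[OF False] by (rule DERIV_isCont)
  then show ?thesis using hc by (intro continuous_intros)
next
  case True
  have s0: "sin (t0/2) = 0"
  proof -
    have "cos t0 = 1 - 2 * (sin (t0/2))^2" using cos_double_sin[of "t0/2"] by simp
    then show ?thesis using True by simp
  qed
  have v0: "h t0 * gL t0 = 0" unfolding gL_def using True by simp
  define V :: "real \<Rightarrow> real" where "V = (\<lambda>t. sin (t/2) * ln (4 * (sin (t/2))^2))"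
  let ?W = "\<lambda>t. \<bar>C\<bar> * \<bar>V t\<bar>"
  have "isCont V t0" unfolding V_def
  proof (rule isCont_o2[where f="\<lambda>t. sin (t/2)" and a=t0 and g="\<lambda>y. y * ln (4 * y^2)"])
    show "isCont (\<lambda>t. sin (t / 2)) t0" by (intro continuous_intros) simp
    show "isCont (\<lambda>y. y * ln (4 * y\<^sup>2)) (sin (t0 / 2))" using W_isCont s0 by simp
  qed
  then have "isCont ?W t0" by (intro continuous_intros)
  then have W0: "(?W \<longlongrightarrow> 0) (at t0)"
    unfolding isCont_def using s0 by (simp add: V_def)
  have "((\<lambda>t. h t * gL t) \<longlongrightarrow> 0) (at t0)"
  proof (rule Lim_null_comparison[OF _ W0])
    show "\<forall>\<^sub>F t in at t0. norm (h t * gL t) \<le> ?W t"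
    proof (intro always_eventually allI)
      fix t
      have "norm (h t * gL t) = \<bar>h t\<bar> * \<bar>ln (4 * (sin (t/2))^2)\<bar>"
        by (simp add: gL_alt abs_mult)
      also have "\<dots> \<le> (C * \<bar>sin (t/2)\<bar>) * \<bar>ln (4 * (sin (t/2))^2)\<bar>"
        by (intro mult_right_mono bnd) auto
      also have "\<dots> \<le> ?W t"
        unfolding V_def abs_mult mult.assoc[symmetric]
        by (intro mult_right_mono) auto
      finally show "norm (h t * gL t) \<le> ?W t" .
    qed
  qed
  then show ?thesis unfolding isCont_def by (subst v0)
qed

lemma sin_k_bound: "\<bar>sin (real k * t)\<bar> \<le> 2 * real k * \<bar>sin (t/2)\<bar>"
  using abs_sin_mult_le[of "2*k" "t/2"] by simp

lemma cos_k_bound: "\<bar>1 - cos (real k * t)\<bar> \<le> 2 * (real k)^2 * \<bar>sin (t/2)\<bar>"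
proof -
  have e: "1 - cos (real k * t) = 2 * (sin (real k * (t/2)))^2"
    using cos_double_sin[of "real k * (t/2)"] by simp
  have b: "\<bar>sin (real k * (t/2))\<bar> \<le> real k * \<bar>sin (t/2)\<bar>" by (rule abs_sin_mult_le)
  have "(sin (real k * (t/2)))^2 \<le> (real k * \<bar>sin (t/2)\<bar>)^2"
    using b by (metis abs_ge_zero power2_abs power_mono)
  also have "\<dots> = (real k)^2 * \<bar>sin (t/2)\<bar> * \<bar>sin (t/2)\<bar>" by (simp add: power2_eq_square)
  also have "\<dots> \<le> (real k)^2 * \<bar>sin (t/2)\<bar>"
    by (intro mult_left_le) (auto intro: abs_sin_le_one)
  finally show ?thesis unfolding e by simp
qed

lemma isCont_Af: "isCont (Af k) t"
proof -
  define F where "F = (\<lambda>t. sin (real k * t) * gL t)"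
  have "isCont F t" unfolding F_def
    by (rule isCont_h_gL[OF sin_k_bound]) (intro continuous_intros)
  moreover have "Af k = (\<lambda>t. (F t - P1 k t) * inverse (real k))"
    unfolding Af_def[abs_def] F_def divide_inverse by simp
  ultimately show ?thesis unfolding P1_def divide_inverse by (auto intro!: continuous_intros)
qed

lemma isCont_Bf: "isCont (Bf k) t"
proof -
  define F where "F = (\<lambda>t. (1 - cos (real k * t)) * gL t)"
  have "isCont F t" unfolding F_def
    by (rule isCont_h_gL[OF cos_k_bound]) (intro continuous_intros)
  moreover have "Bf k = (\<lambda>t. (F t - P2 k t) * inverse (real k))"
    unfolding Bf_def[abs_def] F_def divide_inverse by simp
  ultimately show ?thesis unfolding P2_def divide_inverse by (auto intro!: continuous_intros)
qed



lemma cos_ne_1: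
  fixes u :: real
  assumes "-2*pi < u" "u < 2*pi" "u \<noteq> 0"
  shows "cos u \<noteq> 1"
proof
  assume "cos u = 1"
  then obtain n :: int where n: "u = of_int n * 2 * pi" using cos_one_2pi_int by blast
  have "-1 < real_of_int n"
  proof (rule ccontr)
    assume "\<not> -1 < real_of_int n"
    then have "real_of_int n * (2*pi) \<le> -1 * (2*pi)" using pi_gt_zero by (intro mult_right_mono) auto
    then show False using assms(1) n by simp
  qed
  moreover have "real_of_int n < 1"
  proof (rule ccontr)
    assume "\<not> real_of_int n < 1"
    then have "1 * (2*pi) \<le> real_of_int n * (2*pi)" using pi_gt_zero by (intro mult_right_mono) auto
    then show False using assms(2) n by simp
  qed
  ultimately have "n = 0" by linarith
  then show False using n assms(3) by simp
qed

lemma Phi_deriv: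
  assumes "k \<ge> 1" "cos (x - a) \<noteq> 1"
  shows "(Phi k a has_real_derivative cos (real k * x) * gL (x - a)) (at x)"
proof -
  have d1: "((\<lambda>x. x - a) has_real_derivative 1) (at x)" by (auto intro!: derivative_eq_intros)
  have dA: "((\<lambda>x. Af k (x - a)) has_real_derivative cos (real k * (x - a)) * gL (x - a)) (at x)"
    using DERIV_chain2[OF Af_deriv[OF assms] d1] by simp
  have dB: "((\<lambda>x. Bf k (x - a)) has_real_derivative sin (real k * (x - a)) * gL (x - a)) (at x)"
    using DERIV_chain2[OF Bf_deriv[OF assms] d1] by simp
  have e: "cos (real k * x) = cos (real k * a) * cos (real k * (x - a)) - sin (real k * a) * sin (real k * (x - a))"
    using cos_add[of "real k * a" "real k * (x - a)"] by (simp add: algebra_simps)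
  show ?thesis
    unfolding Phi_def[abs_def]
    apply (rule DERIV_cong)
      apply (rule DERIV_diff)
      apply (rule DERIV_cmult, rule dA)
     apply (rule DERIV_cmult, rule dB)
    unfolding e by (simp add: algebra_simps)
qed

lemma isCont_Phi: "isCont (Phi k a) x"
proof -
  have "isCont (\<lambda>x. Af k (x - a)) x"
    by (rule isCont_o2[where f="\<lambda>x. x - a" and a=x and g="Af k"]) (auto intro: isCont_Af continuous_intros)
  moreover have "isCont (\<lambda>x. Bf k (x - a)) x"
    by (rule isCont_o2[where f="\<lambda>x. x - a" and a=x and g="Bf k"]) (auto intro: isCont_Bf continuous_intros)
  ultimately show ?thesis unfolding Phi_def[abs_def] by (intro continuous_intros)
qed

lemma Phi_integral:
  assumes "k \<ge> 1" "0 < a" "a < pi" "-pi \<le> x" "x \<le> y" "y \<le> pi"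
  shows "((\<lambda>t. cos (real k * t) * gL (t - a)) has_integral (Phi k a y - Phi k a x)) {x..y}"
proof (rule fundamental_theorem_of_calculus_interior_strong[where S="{a}"])
  show "finite {a}" by simp
  show "x \<le> y" by fact
  show "continuous_on {x..y} (Phi k a)"
    by (intro continuous_at_imp_continuous_on ballI isCont_Phi)
  fix t assume t: "t \<in> {x<..<y} - {a}"
  have "cos (t - a) \<noteq> 1" using t assms by (intro cos_ne_1) auto
  then show "(Phi k a has_vector_derivative cos (real k * t) * gL (t - a)) (at t)"
    using Phi_deriv[OF assms(1)] by (simp add: has_real_derivative_iff_has_vector_derivative)
qed



lemma per_sin: "sin (real j * (t - 2*pi)) = sin (real j * t)"
proof -
  have "real j * (t - 2*pi) = real j * t - real (2*j) * pi" by (simp add: algebra_simps)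
  then show ?thesis by (simp add: sin_diff)
qed

lemma per_cos: "cos (real j * (t - 2*pi)) = cos (real j * t)"
proof -
  have "real j * (t - 2*pi) = real j * t - real (2*j) * pi" by (simp add: algebra_simps)
  then show ?thesis by (simp add: cos_diff)
qed

lemma per_gL: "gL (t - 2*pi) = gL t"
  unfolding gL_def by (simp add: cos_diff)

lemma per_P1: "P1 k (t - 2*pi) = P1 k t - 2*pi"
  unfolding P1_def per_sin by simp

lemma per_P2: "P2 k (t - 2*pi) = P2 k t"
  unfolding P2_def per_cos by simp

lemma per_Af: "k \<ge> 1 \<Longrightarrow> Af k (t - 2*pi) = Af k t + 2*pi / real k"
  unfolding Af_def per_sin per_gL per_P1 by (simp add: field_simps)

lemma per_Bf: "Bf k (t - 2*pi) = Bf k t"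
  unfolding Bf_def per_cos per_gL per_P2 by simp

lemma Phi_period: "k \<ge> 1 \<Longrightarrow> Phi k a (x - 2*pi) = Phi k a x + cos (real k * a) * (2*pi / real k)"
proof -
  assume k: "k \<ge> 1"
  have "x - 2*pi - a = (x - a) - 2*pi" by simp
  then show ?thesis unfolding Phi_def using per_Af[OF k, of "x - a"] per_Bf[of k "x - a"]
    by (simp add: algebra_simps)
qed

lemma gL_even: "gL (- t) = gL t" unfolding gL_def by simp

lemma ln_split:
  assumes "0 < a" "a < pi" "0 \<le> t" "t \<le> pi" "t \<noteq> a"
  shows "ln ((cos t - cos a)^2) = gL (t - a) + gL (t + a) - ln 4"
proof -
  have c1: "cos (t - a) \<noteq> 1" using assms by (intro cos_ne_1) auto
  have c2: "cos (t + a) \<noteq> 1" using assms by (intro cos_ne_1) auto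
  have p1: "2 - 2 * cos (t - a) > 0" using c1 cos_le_one[of "t - a"] by linarith
  have p2: "2 - 2 * cos (t + a) > 0" using c2 cos_le_one[of "t + a"] by linarith
  have prod: "(2 - 2 * cos (t - a)) * (2 - 2 * cos (t + a)) = 4 * (cos t - cos a)^2"
    unfolding cos_diff cos_add power2_eq_square using sin_cos_squared_add[of t] sin_cos_squared_add[of a]
    by algebra
  have "gL (t - a) + gL (t + a) - ln 4 = ln ((2 - 2 * cos (t - a)) * (2 - 2 * cos (t + a)) / 4)"
    unfolding gL_def using p1 p2 by (simp add: ln_mult ln_div)
  also have "\<dots> = ln ((cos t - cos a)^2)" unfolding prod by simp
  finally show ?thesis by simp
qed

lemma lemmaA:
  fixes m :: nat and a :: real
  assumes m: "m \<ge> 1" and a: "0 < a" "a < pi"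
  shows "((\<lambda>t. cos (2 * real m * t) * ln ((cos t - cos a)^2)) has_integral
            (- pi * cos (2 * real m * a) / real m)) {0..pi}"
proof -
  define k where "k = 2 * m"
  have k: "k \<ge> 1" using m k_def by simp
  have rk: "real k = 2 * real m" unfolding k_def by simp
  let ?f = "\<lambda>t. cos (real k * t) * gL (t - a)"
  have h1: "(?f has_integral (Phi k a pi - Phi k a 0)) {0..pi}"
    using Phi_integral[OF k a, of 0 pi] by simp
  have h2: "(?f has_integral (Phi k a 0 - Phi k a (-pi))) {-pi..0}"
    using Phi_integral[OF k a, of "-pi" 0] by simp
  then have h2': "((\<lambda>t. cos (real k * t) * gL (t + a)) has_integral (Phi k a 0 - Phi k a (-pi))) {0..pi}"
  proof -
    have ev: "\<And>t. gL (- t - a) = gL (t + a)"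
    proof -
      fix t have "- t - a = - (t + a)" by simp
      then show "gL (- t - a) = gL (t + a)" using gL_even by metis
    qed
    have r: "((\<lambda>x. ?f (-x)) has_integral (Phi k a 0 - Phi k a (-pi))) {-0..-(-pi)}"
      using has_integral_reflect_real[of ?f "Phi k a 0 - Phi k a (-pi)" 0 "-pi", THEN iffD2, OF h2] .
    have fe: "(\<lambda>x. ?f (-x)) = (\<lambda>t. cos (real k * t) * gL (t + a))"
      by (rule ext) (simp add: ev)
    show ?thesis using r unfolding fe by simp
  qed
  have h3: "((\<lambda>t. cos (real k * t) * ln 4) has_integral 0) {0..pi}"
  proof -
    have "((\<lambda>t. cos (real k * t) * ln 4) has_integral (sin (real k * pi) / real k * ln 4 - sin (real k * 0) / real k * ln 4)) {0..pi}"
      using k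
      by (intro fundamental_theorem_of_calculus)
         (auto intro!: derivative_eq_intros simp: has_real_derivative_iff_has_vector_derivative[symmetric])
    then show ?thesis by simp
  qed
  have tot: "((\<lambda>t. cos (real k * t) * gL (t - a) + cos (real k * t) * gL (t + a) - cos (real k * t) * ln 4)
      has_integral (Phi k a pi - Phi k a (-pi))) {0..pi}"
    using has_integral_diff[OF has_integral_add[OF h1 h2'] h3] by simp
  have val: "Phi k a pi - Phi k a (-pi) = - pi * cos (2 * real m * a) / real m"
    using Phi_period[OF k, of a pi] m unfolding rk by (simp add: field_simps)
  show ?thesis
  proof (rule has_integral_spike_finite[where S="{a}", OF _ _ tot[unfolded val]])
    show "finite {a}" by simp
    fix t assume t: "t \<in> {0..pi} - {a}"
    then show "cos (2 * real m * t) * ln ((cos t - cos a)^2) =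
       cos (real k * t) * gL (t - a) + cos (real k * t) * gL (t + a) - cos (real k * t) * ln 4"
    proof -
      have e: "ln ((cos t - cos a)^2) = gL (t - a) + gL (t + a) - ln 4"
        using ln_split[OF a, of t] t by auto
      show ?thesis unfolding e rk by (simp add: algebra_simps)
    qed
  qed
qed



fun Up :: "nat \<Rightarrow> real poly" where
  "Up 0 = 1"
| "Up (Suc 0) = [:0, 2:]"
| "Up (Suc (Suc k)) = [:0, 2:] * Up (Suc k) - Up k"

lemma gegen_U:
  "gegenbauer2 n x = (\<Sum>k=0..n. poly (Up k) x * poly (Up (n-k)) x)"
proof -
  define D :: "real fps" where "D = 1 - fps_const (2 * x) * fps_X + fps_X ^ 2"
  define Uf :: "real fps" where "Uf = Abs_fps (\<lambda>k. poly (Up k) x)"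
  have DU: "D * Uf = 1"
  proof (rule fps_ext)
    fix k
    have e: "D * Uf = Uf - fps_const (2 * x) * (fps_X * Uf) + fps_X ^ 2 * Uf"
      unfolding D_def by (simp add: algebra_simps)
    show "fps_nth (D * Uf) k = fps_nth (1 :: real fps) k"
    proof (cases k)
      case 0 then show ?thesis unfolding e by (simp add: Uf_def fps_X_power_mult_nth)
    next
      case (Suc j)
      then show ?thesis
      proof (cases j)
        case 0 then show ?thesis using Suc unfolding e by (simp add: Uf_def fps_X_power_mult_nth)
      next
        case (Suc i)
        then show ?thesis using \<open>k = Suc j\<close> unfolding e
          by (simp add: Uf_def fps_X_power_mult_nth algebra_simps)
      qed
    qed
  qed
  have "inverse D = Uf" using fps_inverse_unique[OF DU] .
  then have "inverse (D ^ 2) = Uf ^ 2" by (simp add: fps_inverse_power)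
  then have "gegenbauer2 n x = fps_nth (Uf ^ 2) n"
    unfolding gegenbauer2_def D_def by simp
  also have "\<dots> = (\<Sum>k=0..n. poly (Up k) x * poly (Up (n-k)) x)"
    unfolding power2_eq_square fps_mult_nth by (simp add: Uf_def)
  finally show ?thesis .
qed

lemma Up_sin: "sin t * poly (Up k) (cos t) = sin (real (Suc k) * t)"
proof (induction k rule: Up.induct)
  case 1 then show ?case by simp
next
  case 2 then show ?case by (simp add: sin_double)
next
  case (3 k)
  have e: "sin (real (Suc (Suc (Suc k))) * t) = 2 * cos t * sin (real (Suc (Suc k)) * t) - sin (real (Suc k) * t)"
  proof -
    have a: "real (Suc (Suc (Suc k))) * t = real (Suc (Suc k)) * t + t" by (simp add: algebra_simps)
    have b: "real (Suc k) * t = real (Suc (Suc k)) * t - t" by (simp add: algebra_simps)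
    show ?thesis unfolding a b sin_add sin_diff by (simp add: algebra_simps)
  qed
  show ?case using 3 unfolding e by (simp add: algebra_simps)
qed

lemma Up_degree: "degree (Up k) \<le> k"
proof (induction k rule: Up.induct)
  case 1 then show ?case by simp
next
  case 2 then show ?case by simp
next
  case (3 k)
  have "degree ([:0, 2:] * Up (Suc k)) \<le> Suc (Suc k)"
    using degree_mult_le[of "[:0,2:]" "Up (Suc k)"] 3(1) by simp
  moreover have "degree (Up k) \<le> Suc (Suc k)" using 3(2) by simp
  ultimately show ?case by (simp add: degree_diff_le)
qed

definition Vv :: "nat \<Rightarrow> real \<Rightarrow> real" where "Vv k t = (\<Sum>i=0..k. t ^ (2*i))"

lemma Up_t:
  assumes "t \<noteq> 0"
  shows "t ^ k * poly (Up k) ((t + 1/t)/2) = Vv k t"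
proof (induction k rule: Up.induct)
  case 1 then show ?case by (simp add: Vv_def)
next
  case 2 then show ?case using assms by (simp add: Vv_def field_simps power2_eq_square)
next
  case (3 k)
  have v: "Vv (Suc (Suc k)) t = (1 + t^2) * Vv (Suc k) t - t^2 * Vv k t"
    by (simp add: Vv_def algebra_simps power_add power_mult)
  have "t ^ Suc (Suc k) * poly (Up (Suc (Suc k))) ((t + 1/t)/2)
      = (t^2 + 1) * (t ^ Suc k * poly (Up (Suc k)) ((t + 1/t)/2)) - t^2 * (t ^ k * poly (Up k) ((t + 1/t)/2))"
    using assms by (simp add: field_simps power2_eq_square)
  then show ?case unfolding 3 v by (simp add: algebra_simps)
qed



definition Gp :: "nat \<Rightarrow> real poly" where "Gp n = (\<Sum>k=0..n. Up k * Up (n-k))"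

lemma poly_Gp: "poly (Gp n) x = gegenbauer2 n x"
  unfolding Gp_def gegen_U by (simp add: poly_sum)

lemma Gp_degree: "degree (Gp n) \<le> n"
  unfolding Gp_def
proof (rule degree_sum_le)
  fix k assume "k \<in> {0..n}"
  then show "degree (Up k * Up (n - k)) \<le> n"
    using degree_mult_le[of "Up k" "Up (n-k)"] Up_degree[of k] Up_degree[of "n-k"] by simp
qed simp

lemma sin2_gegen:
  "(sin t)^2 * gegenbauer2 n (cos t) = (\<Sum>k=0..n. sin (real (Suc k) * t) * sin (real (Suc (n-k)) * t))"
  unfolding gegen_U sum_distrib_left
proof (rule sum.cong[OF refl])
  fix k assume "k \<in> {0..n}"
  show "(sin t)^2 * (poly (Up k) (cos t) * poly (Up (n - k)) (cos t)) =
    sin (real (Suc k) * t) * sin (real (Suc (n - k)) * t)"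
    unfolding Up_sin[symmetric] by (simp add: power2_eq_square algebra_simps)
qed

lemma gegen_sign:
  assumes "1 \<le> k" "k \<le> n + 1"
  shows "(-1)^(k+1) * gegenbauer2 n (cos (real k * pi / real (n+2))) > 0"
proof -
  define t where "t = real k * pi / real (n+2)"
  have tk: "real (n+2) * t = real k * pi" unfolding t_def by simp
  have kk: "real k < real (n+2)" using assms by simp
  have kk2: "pi * real k < pi * real (n+2)" using kk pi_gt_zero by (intro mult_strict_left_mono) auto
  have t0: "0 < t" "t < pi" using assms kk2 pi_gt_zero unfolding t_def by (auto simp: field_simps)
  have st: "sin t > 0" using t0 by (intro sin_gt_zero) auto
  have trm: "sin (real (Suc (n-i)) * t) = (-1)^(k+1) * sin (real (Suc i) * t)" if "i \<le> n" for i
  proof -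
    have "real (Suc (n-i)) * t = real k * pi - real (Suc i) * t"
      using that tk by (simp add: of_nat_diff algebra_simps)
    then show ?thesis by (simp add: sin_diff)
  qed
  have "(sin t)^2 * gegenbauer2 n (cos t) = (-1)^(k+1) * (\<Sum>i=0..n. (sin (real (Suc i) * t))^2)"
    unfolding sin2_gegen sum_distrib_left
  proof (rule sum.cong[OF refl])
    fix i assume "i \<in> {0..n}"
    then have e: "sin (real (Suc (n-i)) * t) = (-1)^(k+1) * sin (real (Suc i) * t)" by (intro trm) auto
    show "sin (real (Suc i) * t) * sin (real (Suc (n - i)) * t) = (-1)^(k+1) * (sin (real (Suc i) * t))\<^sup>2"
      unfolding e by (simp add: power2_eq_square)
  qed
  then have "(-1)^(k+1) * ((sin t)^2 * gegenbauer2 n (cos t)) = ((-1::real)^(k+1) * (-1)^(k+1)) * (\<Sum>i=0..n. (sin (real (Suc i) * t))^2)"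
    by (simp only: mult.assoc)
  moreover have "(-1::real)^(k+1) * (-1)^(k+1) = 1" by (simp add: power_mult_distrib[symmetric])
  ultimately have e: "(sin t)^2 * ((-1)^(k+1) * gegenbauer2 n (cos t)) = (\<Sum>i=0..n. (sin (real (Suc i) * t))^2)"
    by (simp add: algebra_simps)
  have "(\<Sum>i=0..n. (sin (real (Suc i) * t))^2) \<ge> (sin (real (Suc 0) * t))^2"
    by (rule member_le_sum) auto
  moreover have "(sin (real (Suc 0) * t))^2 > 0" using st by simp
  ultimately have "(\<Sum>i=0..n. (sin (real (Suc i) * t))^2) > 0" by linarith
  then have p1: "(sin t)^2 * ((-1)^(k+1) * gegenbauer2 n (cos t)) > 0" using e by simp
  have p2: "(sin t)^2 > 0" using st by simp
  have "(-1)^(k+1) * gegenbauer2 n (cos t) > 0" by (rule zero_less_mult_pos[OF p1 p2])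
  then show ?thesis unfolding t_def by simp
qed

lemma ivt_strict:
  fixes f :: "real \<Rightarrow> real"
  assumes "a \<le> b" "continuous_on {a..b} f" "f a * f b < 0"
  shows "\<exists>c. a < c \<and> c < b \<and> f c = 0"
proof (cases "f a < 0")
  case True
  then have "f b > 0" using assms(3) by (simp add: mult_less_0_iff)
  then obtain c where c: "c \<ge> a" "c \<le> b" "f c = 0" using IVT'[of f a 0 b] assms True by force
  then have "c \<noteq> a" "c \<noteq> b" using True \<open>f b > 0\<close> by auto
  then have "a < c" "c < b" using c by linarith+
  then show ?thesis using c by blast
next
  case False
  then have "f a > 0" "f b < 0" using assms(3) by (auto simp: mult_less_0_iff)
  then obtain c where c: "c \<ge> a" "c \<le> b" "f c = 0" using IVT2'[of f b 0 a] assms by force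
  then have "c \<noteq> a" "c \<noteq> b" using \<open>f a > 0\<close> \<open>f b < 0\<close> by auto
  then have "a < c" "c < b" using c by linarith+
  then show ?thesis using c by blast
qed

lemma gegen_roots_exist:
  "\<exists>z. \<forall>j\<in>{1..n}. real j * pi / real (n+2) < z j \<and> z j < real (Suc j) * pi / real (n+2)
        \<and> gegenbauer2 n (cos (z j)) = 0"
proof -
  have "\<exists>c. real j * pi / real (n+2) < c \<and> c < real (Suc j) * pi / real (n+2) \<and> gegenbauer2 n (cos c) = 0"
    if j: "j \<in> {1..n}" for j
  proof (rule ivt_strict)
    show "real j * pi / real (n+2) \<le> real (Suc j) * pi / real (n+2)"
      by (intro divide_right_mono mult_right_mono) auto
    show "continuous_on {real j * pi / real (n + 2)..real (Suc j) * pi / real (n + 2)} (\<lambda>c. gegenbauer2 n (cos c))"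
      unfolding poly_Gp[symmetric] by (intro continuous_intros)
    have s1: "(-1)^(j+1) * gegenbauer2 n (cos (real j * pi / real (n+2))) > 0"
      using j by (intro gegen_sign) auto
    have s2: "(-1)^(Suc j+1) * gegenbauer2 n (cos (real (Suc j) * pi / real (n+2))) > 0"
      using j by (intro gegen_sign) auto
    from s1 s2 show "gegenbauer2 n (cos (real j * pi / real (n+2))) * gegenbauer2 n (cos (real (Suc j) * pi / real (n+2))) < 0"
      by (cases "even j") (auto simp: mult_less_0_iff zero_less_mult_iff)
  qed
  then show ?thesis by metis
qed



lemma prod_linear_dvd:
  fixes p :: "real poly"
  assumes "finite S" "\<forall>x\<in>S. poly p x = 0"
  shows "(\<Prod>x\<in>S. [:-x, 1:]) dvd p"
  using assms
proof (induction S rule: finite_induct)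
  case empty then show ?case by simp
next
  case (insert a S)
  then obtain q where q: "p = (\<Prod>x\<in>S. [:-x, 1:]) * q" by (auto elim: dvdE)
  have "poly (\<Prod>x\<in>S. [:-x, 1:]) a \<noteq> 0"
    using insert(1,2) by (auto simp: poly_prod)
  moreover have "poly p a = 0" using insert by auto
  ultimately have "poly q a = 0" unfolding q by simp
  then have "[:-a, 1:] dvd q" by (simp add: poly_eq_0_iff_dvd)
  then obtain r where r: "q = [:-a, 1:] * r" by (auto elim: dvdE)
  have e: "(\<Prod>x\<in>insert a S. [:-x, 1:]) = [:-a, 1:] * (\<Prod>x\<in>S. [:-x, 1:])" using insert(1,2) by simp
  have "p = (\<Prod>x\<in>insert a S. [:-x, 1:]) * r" unfolding e q r by (simp only: mult_ac)
  then show ?case by (rule dvdI)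
qed

lemma poly_factor:
  fixes p :: "real poly"
  assumes S: "finite S" "\<forall>x\<in>S. poly p x = 0" and deg: "degree p \<le> card S"
  shows "p = smult (coeff p (card S)) (\<Prod>x\<in>S. [:-x, 1:])"
proof (cases "p = 0")
  case True then show ?thesis by simp
next
  case False
  define Q where "Q = (\<Prod>x\<in>S. [:-x, 1:] :: real poly)"
  obtain q where q: "p = Q * q" using prod_linear_dvd[OF S] unfolding Q_def by (auto elim: dvdE)
  have Q0: "Q \<noteq> 0" unfolding Q_def using S(1) by (simp add: prod_zero_iff)
  have q0: "q \<noteq> 0" using False q by auto
  have dQ: "degree Q = card S" unfolding Q_def
    using degree_prod_sum_eq[of S "\<lambda>x. [:-x, 1:]"] by simp
  have lQ: "lead_coeff Q = 1" unfolding Q_def by (simp add: lead_coeff_prod)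
  have "degree p = card S + degree q" unfolding q using degree_mult_eq[OF Q0 q0] dQ by simp
  then have dq: "degree q = 0" using deg by simp
  then obtain c where c: "q = [:c:]" by (auto elim: degree_eq_zeroE)
  have "coeff p (card S) = lead_coeff p" using \<open>degree p = card S + degree q\<close> dq by simp
  also have "\<dots> = c" unfolding q lead_coeff_mult lQ c by simp
  finally have cc: "coeff p (card S) = c" .
  have "coeff Q (card S) = 1" using lQ dQ by simp
  show ?thesis unfolding cc unfolding q c Q_def by simp
qed

lemma gegen_factor:
  "\<exists>z c. c \<noteq> 0 \<and> (\<forall>j\<in>{1..n}. 0 < z j \<and> z j < pi) \<and> inj_on (\<lambda>j. cos (z j)) {1..n}
     \<and> (\<forall>y. gegenbauer2 n y = c * (\<Prod>j=1..n. (y - cos (z j))))"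
proof -
  obtain z where z: "\<forall>j\<in>{1..n}. real j * pi / real (n+2) < z j \<and> z j < real (Suc j) * pi / real (n+2)
        \<and> gegenbauer2 n (cos (z j)) = 0"
    using gegen_roots_exist by blast
  have zb: "real j * pi / real (n+2) < z j \<and> z j < real (Suc j) * pi / real (n+2)" if "j \<in> {1..n}" for j
    using z that by auto
  have zr: "0 < z j \<and> z j < pi" if "j \<in> {1..n}" for j
  proof -
    have "0 < real j * pi / real (n+2)" using that by auto
    moreover have "real (Suc j) * pi / real (n+2) \<le> pi"
    proof -
      have "real (Suc j) * pi \<le> real (n+2) * pi" using that by (intro mult_right_mono) auto
      then show ?thesis by (simp add: divide_le_eq)
    qed
    moreover have "real j * pi / real (n+2) < z j" "z j < real (Suc j) * pi / real (n+2)"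
      using z that by auto
    ultimately show ?thesis by linarith
  qed
  have inj: "inj_on (\<lambda>j. cos (z j)) {1..n}"
  proof (rule inj_onI)
    fix i j assume ij: "i \<in> {1..n}" "j \<in> {1..n}" "cos (z i) = cos (z j)"
    show "i = j"
    proof (rule ccontr)
      assume "i \<noteq> j"
      then consider "i < j" | "j < i" by linarith
      then show False
      proof cases
        case 1
        then have "real (Suc i) * pi / real (n+2) \<le> real j * pi / real (n+2)"
          by (intro divide_right_mono mult_right_mono) auto
        then have "z i < z j" using zb[OF ij(1)] zb[OF ij(2)] by linarith
        then have "cos (z j) < cos (z i)" using zr[OF ij(1)] zr[OF ij(2)] by (intro cos_monotone_0_pi) auto
        then show False using ij by simp
      next
        case 2
        then have "real (Suc j) * pi / real (n+2) \<le> real i * pi / real (n+2)"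
          by (intro divide_right_mono mult_right_mono) auto
        then have "z j < z i" using zb[OF ij(1)] zb[OF ij(2)] by linarith
        then have "cos (z i) < cos (z j)" using zr[OF ij(1)] zr[OF ij(2)] by (intro cos_monotone_0_pi) auto
        then show False using ij by simp
      qed
    qed
  qed
  define S where "S = (\<lambda>j. cos (z j)) ` {1..n}"
  have cS: "card S = n" unfolding S_def using card_image[OF inj] by simp
  have fS: "finite S" unfolding S_def by simp
  have rS: "\<forall>x\<in>S. poly (Gp n) x = 0" unfolding S_def poly_Gp using z by auto
  have fac: "Gp n = smult (coeff (Gp n) n) (\<Prod>x\<in>S. [:-x, 1:])"
    using poly_factor[OF fS rS] Gp_degree[of n] cS by simp
  define c where "c = coeff (Gp n) n"
  have ev: "gegenbauer2 n y = c * (\<Prod>j=1..n. (y - cos (z j)))" for y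
  proof -
    have "gegenbauer2 n y = c * (\<Prod>x\<in>S. (y - x))"
      unfolding poly_Gp[symmetric] c_def by (subst fac) (simp add: poly_prod)
    also have "(\<Prod>x\<in>S. (y - x)) = (\<Prod>j=1..n. (y - cos (z j)))"
      unfolding S_def by (subst prod.reindex[OF inj]) simp
    finally show ?thesis .
  qed
  have c0: "c \<noteq> 0"
  proof
    assume "c = 0"
    then have "gegenbauer2 n (cos (real 1 * pi / real (n+2))) = 0" using ev by simp
    moreover have "(-1)^(1+1) * gegenbauer2 n (cos (real 1 * pi / real (n+2))) > 0"
      by (rule gegen_sign) auto
    ultimately show False by simp
  qed
  show ?thesis using c0 zr inj ev by blast
qed



definition Vp :: "nat \<Rightarrow> real poly" where "Vp k = (\<Sum>i=0..k. monom 1 (2*i))"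
definition Ptp :: "nat \<Rightarrow> real poly" where "Ptp n = (\<Sum>k=0..n. Vp k * Vp (n-k))"
definition Rtp :: "nat \<Rightarrow> real poly" where
  "Rtp n = monom (real n + 1) 0 - monom (real n + 3) 2 + monom (real n + 3) (2*n+4) - monom (real n + 1) (2*n+6)"

lemma poly_Vp: "poly (Vp k) t = Vv k t"
  unfolding Vp_def Vv_def by (simp add: poly_sum poly_monom)

lemma poly_Ptp: "poly (Ptp n) t = (\<Sum>k=0..n. Vv k t * Vv (n-k) t)"
  unfolding Ptp_def by (simp add: poly_sum poly_Vp)

lemma Vv_tel: "(1 - t^2) * Vv k t = 1 - t^(2*k+2)"
proof (induction k)
  case 0 then show ?case by (simp add: Vv_def power2_eq_square)
next
  case (Suc k)
  have v: "Vv (Suc k) t = Vv k t + t^(2*k+2)" by (simp add: Vv_def)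
  have p: "t^2 * t^(2*k+2) = t^(2 * Suc k + 2)"
    by (simp only: power_add[symmetric]) simp
  have "(1 - t^2) * Vv (Suc k) t = (1 - t^2) * Vv k t + t^(2*k+2) - t^2 * t^(2*k+2)"
    unfolding v by (simp add: algebra_simps)
  also have "\<dots> = 1 - t^(2 * Suc k + 2)" unfolding Suc p by simp
  finally show ?case .
qed

lemma sum_rev_pow: "(\<Sum>k=0..n. (t::real)^(2*(n-k)+2)) = (\<Sum>k=0..n. t^(2*k+2))"
  by (rule sum.reindex_bij_witness[where i="\<lambda>k. n - k" and j="\<lambda>k. n - k"]) auto

lemma R_identity:
  "(1 - t^2)^3 * poly (Ptp n) t = (real n + 1) - (real n + 3) * t^2 + (real n + 3) * t^(2*n+4) - (real n + 1) * t^(2*n+6)"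
proof -
  have "(1 - t^2)^2 * poly (Ptp n) t = (\<Sum>k=0..n. ((1 - t^2) * Vv k t) * ((1 - t^2) * Vv (n-k) t))"
    unfolding poly_Ptp sum_distrib_left by (rule sum.cong) (auto simp: power2_eq_square algebra_simps)
  also have "\<dots> = (\<Sum>k=0..n. (1 - t^(2*k+2)) * (1 - t^(2*(n-k)+2)))"
    unfolding Vv_tel by simp
  also have "\<dots> = (\<Sum>k=0..n. 1 + t^(2*n+4) - t^(2*k+2) - t^(2*(n-k)+2))"
  proof (rule sum.cong[OF refl])
    fix k assume "k \<in> {0..n}"
    then have ee: "2*k+2 + (2*(n-k)+2) = 2*n+4" by simp
    have "t^(2*k+2) * t^(2*(n-k)+2) = t^(2*k+2 + (2*(n-k)+2))" by (simp only: power_add)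
    then have "t^(2*k+2) * t^(2*(n-k)+2) = t^(2*n+4)" unfolding ee .
    then show "(1 - t^(2*k+2)) * (1 - t^(2*(n-k)+2)) = 1 + t^(2*n+4) - t^(2*k+2) - t^(2*(n-k)+2)"
      by (simp add: algebra_simps)
  qed
  also have "\<dots> = (real n + 1) * (1 + t^(2*n+4)) - 2 * (\<Sum>k=0..n. t^(2*k+2))"
    by (simp only: sum_subtractf sum.distrib sum_rev_pow) (simp add: algebra_simps)
  finally have e1: "(1 - t^2)^2 * poly (Ptp n) t = (real n + 1) * (1 + t^(2*n+4)) - 2 * (\<Sum>k=0..n. t^(2*k+2))" .
  have e2: "(1 - t^2) * (\<Sum>k=0..n. t^(2*k+2)) = t^2 - t^(2*n+4)"
  proof -
    have "(\<Sum>k=0..n. t^(2*k+2)) = t^2 * Vv n t" unfolding Vv_def sum_distrib_left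
      by (rule sum.cong) (auto simp: power_add mult.commute power2_eq_square)
    then have "(1 - t^2) * (\<Sum>k=0..n. t^(2*k+2)) = t^2 * ((1 - t^2) * Vv n t)" by simp
    also have "\<dots> = t^2 - t^2 * t^(2*n+2)" unfolding Vv_tel by (simp add: algebra_simps)
    also have "t^2 * t^(2*n+2) = t^(2*n+4)"
    proof -
      have ee: "2 + (2*n+2) = 2*n+4" by simp
      show ?thesis by (simp only: power_add[symmetric] ee)
    qed
    finally show ?thesis .
  qed
  have "(1 - t^2)^3 * poly (Ptp n) t = (1 - t^2) * ((1 - t^2)^2 * poly (Ptp n) t)"
    by (simp add: power3_eq_cube power2_eq_square)
  also have "\<dots> = (1 - t^2) * (real n + 1) * (1 + t^(2*n+4)) - 2 * ((1 - t^2) * (\<Sum>k=0..n. t^(2*k+2)))"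
    unfolding e1 by (simp add: algebra_simps)
  also have "\<dots> = (real n + 1) - (real n + 3) * t^2 + (real n + 3) * t^(2*n+4) - (real n + 1) * t^(2*n+6)"
  proof -
    have ee: "2 + (2*n+4) = 2*n+6" by simp
    have p6: "t^(2*n+6) = t^2 * t^(2*n+4)" by (simp only: power_add[symmetric] ee)
    show ?thesis unfolding e2 p6 by (simp add: algebra_simps)
  qed
  finally show ?thesis .
qed

lemma R_poly: "[:1, 0, -1:] ^ 3 * Ptp n = Rtp n"
proof -
  have "poly ([:1, 0, -1:] ^ 3 * Ptp n) t = poly (Rtp n) t" for t
    using R_identity[of t n] by (simp add: Rtp_def poly_monom power2_eq_square)
  then show ?thesis using poly_eq_poly_eq_iff by blast
qed



lemma Vv_0: "Vv k 0 = 1"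
  unfolding Vv_def by (induction k) auto

lemma Gamma_eq:
  assumes c0: "c \<noteq> 0" and fac: "\<forall>y. gegenbauer2 n y = c * (\<Prod>j=1..n. (y - cos (z j)))"
  shows "(\<Prod>j=1..n. [:1, -2*cos (z j), 1:]) = smult (1/(real n+1)) (Ptp n)"
proof -
  define G where "G = (\<Prod>j=1..n. [:1, -2*cos (z j), 1:])"
  define K where "K = 2^n / c"
  have pt: "poly G t = K * poly (Ptp n) t" if t: "t \<noteq> 0" for t
  proof -
    define X where "X = (t + 1/t)/2"
    have "poly G t = (\<Prod>j=1..n. (2*t) * (X - cos (z j)))"
      unfolding G_def poly_prod
    proof (rule prod.cong[OF refl])
      fix j show "poly [:1, -2*cos (z j), 1:] t = (2*t) * (X - cos (z j))"
        using t unfolding X_def by (simp add: field_simps power2_eq_square)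
    qed
    also have "\<dots> = (2*t)^n * (\<Prod>j=1..n. (X - cos (z j)))"
      by (simp add: prod.distrib)
    also have "\<dots> = (2*t)^n * (gegenbauer2 n X / c)"
      using fac c0 by simp
    also have "\<dots> = K * (t^n * gegenbauer2 n X)"
      unfolding K_def by (simp add: power_mult_distrib)
    also have "t^n * gegenbauer2 n X = poly (Ptp n) t"
      unfolding gegen_U poly_Ptp sum_distrib_left
    proof (rule sum.cong[OF refl])
      fix k assume "k \<in> {0..n}"
      then have "t^n = t^k * t^(n-k)" by (simp add: power_add[symmetric])
      then show "t^n * (poly (Up k) X * poly (Up (n-k)) X) = Vv k t * Vv (n-k) t"
      proof -
        have "t^n * (poly (Up k) X * poly (Up (n-k)) X) = (t^k * poly (Up k) X) * (t^(n-k) * poly (Up (n-k)) X)"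
          unfolding \<open>t^n = t^k * t^(n-k)\<close> by (simp only: mult_ac)
        then show ?thesis using Up_t[OF t, of k] Up_t[OF t, of "n-k"] unfolding X_def by simp
      qed
    qed
    finally show ?thesis .
  qed
  have GK: "G = smult K (Ptp n)"
  proof (rule ccontr)
    assume ne: "G \<noteq> smult K (Ptp n)"
    then have "G - smult K (Ptp n) \<noteq> 0" by simp
    then have "finite {t. poly (G - smult K (Ptp n)) t = 0}" by (rule poly_roots_finite)
    moreover have "UNIV - {0} \<subseteq> {t. poly (G - smult K (Ptp n)) t = 0}" using pt by auto
    ultimately have "finite (UNIV - {0::real})" by (rule finite_subset[rotated])
    then show False using infinite_UNIV_char_0 by auto
  qed
  have "poly G 0 = 1" unfolding G_def by (simp add: poly_prod)
  moreover have "poly (Ptp n) 0 = real n + 1" unfolding poly_Ptp Vv_0 by simp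
  ultimately have "K * (real n + 1) = 1" using GK by simp
  then have "K = 1/(real n + 1)" by (simp add: field_simps)
  then show ?thesis using GK unfolding G_def by simp
qed



definition Dx :: "real \<Rightarrow> real fps" where
  "Dx t = 1 - fps_const (2 * cos t) * fps_X + fps_X ^ 2"
definition Sx :: "real \<Rightarrow> real fps" where
  "Sx t = Abs_fps (\<lambda>k. 2 * cos (real (Suc k) * t))"

lemma Dx_nth: "fps_nth (Dx t) k = (if k = 0 then 1 else if k = 1 then - 2 * cos t else if k = 2 then 1 else 0)"
  unfolding Dx_def by (simp add: fps_X_power_nth)

lemma D_deriv: "fps_deriv (Dx t) = - (Dx t * Sx t)"
proof (rule fps_ext)
  fix k
  have e: "Dx t * Sx t = Sx t - fps_const (2 * cos t) * (fps_X * Sx t) + fps_X ^ 2 * Sx t"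
    unfolding Dx_def by (simp add: algebra_simps)
  show "fps_nth (fps_deriv (Dx t)) k = fps_nth (- (Dx t * Sx t)) k"
  proof (cases k)
    case 0 then show ?thesis unfolding e by (simp add: Dx_nth Sx_def fps_X_power_mult_nth)
  next
    case (Suc j)
    show ?thesis
    proof (cases j)
      case 0
      have "cos (2 * t) = 2 * (cos t)^2 - 1" by (rule cos_double_cos)
      then show ?thesis using Suc 0 unfolding e
        by (simp add: Dx_nth Sx_def fps_X_power_mult_nth power2_eq_square algebra_simps)
    next
      case (Suc i)
      have c: "cos (real (Suc (Suc (Suc i))) * t) + cos (real (Suc i) * t) = 2 * cos t * cos (real (Suc (Suc i)) * t)"
      proof -
        have a: "real (Suc (Suc (Suc i))) * t = real (Suc (Suc i)) * t + t" by (simp add: algebra_simps)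
        have b: "real (Suc i) * t = real (Suc (Suc i)) * t - t" by (simp add: algebra_simps)
        show ?thesis unfolding a b cos_add cos_diff by (simp add: algebra_simps)
      qed
      have c2: "2 * cos (t + t * real i) + 2 * cos (t * real i + t * 3) = cos t * (4 * cos (t * real i + t * 2))"
        using c by (simp add: algebra_simps)
      show ?thesis using \<open>k = Suc j\<close> Suc unfolding e
        by (simp add: Dx_nth Sx_def fps_X_power_mult_nth algebra_simps c2)
    qed
  qed
qed

lemma prod_D_deriv:
  assumes "finite A"
  shows "fps_deriv (\<Prod>j\<in>A. Dx (z j)) = - ((\<Prod>j\<in>A. Dx (z j)) * (\<Sum>j\<in>A. Sx (z j)))"
  using assms
proof (induction A rule: finite_induct)
  case empty then show ?case by simp
next
  case (insert a A)
  then show ?case by (simp add: D_deriv algebra_simps)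
qed

lemma fps_D: "fps_of_poly [:1, -2 * cos t, 1:] = Dx t"
  by (rule fps_ext) (simp add: Dx_nth coeff_pCons split: nat.split)



lemma fps_Q: "fps_of_poly [:1, 0, -1:] = (1 - fps_X ^ 2 :: real fps)"
  by (rule fps_ext) (simp add: coeff_pCons fps_X_power_nth split: nat.split)

lemma Rtp_coeff: "coeff (Rtp n) k = (if k = 0 then real n + 1 else 0) - (if k = 2 then real n + 3 else 0)
   + (if k = 2*n+4 then real n + 3 else 0) - (if k = 2*n+6 then real n + 1 else 0)"
  unfolding Rtp_def by simp

lemma key_identity:
  assumes c0: "c \<noteq> 0" and fac: "\<forall>y. gegenbauer2 n y = c * (\<Prod>j=1..n. (y - cos (z j)))"
  defines "Y \<equiv> (\<Sum>j=1..n. Sx (z j))"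
  defines "Q \<equiv> (1 - fps_X ^ 2 :: real fps)"
  defines "Rf \<equiv> fps_of_poly (Rtp n)"
  shows "Rf * (Q * Y + 6 * fps_X) = - (Q * fps_deriv Rf)"
proof -
  define Pf where "Pf = fps_of_poly (Ptp n)"
  define Gf where "Gf = (\<Prod>j=1..n. Dx (z j))"
  have "Gf = fps_of_poly (\<Prod>j=1..n. [:1, -2*cos (z j), 1:])"
    unfolding Gf_def fps_of_poly_prod fps_D ..
  also have "\<dots> = fps_const (1/(real n+1)) * Pf"
    unfolding Gamma_eq[OF c0 fac] Pf_def fps_of_poly_smult ..
  finally have PG: "Pf = fps_const (real n + 1) * Gf"
    by (simp add: fps_const_mult[symmetric] mult.assoc[symmetric])
  have dG: "fps_deriv Gf = - (Gf * Y)" unfolding Gf_def Y_def by (rule prod_D_deriv) simp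
  have dP: "fps_deriv Pf = - (Pf * Y)" unfolding PG by (simp add: dG)
  have RQ: "Rf = Q^3 * Pf"
    unfolding Rf_def Pf_def Q_def R_poly[symmetric] fps_of_poly_mult fps_of_poly_power fps_Q ..
  have dQ: "fps_deriv Q = - (2 * fps_X)" unfolding Q_def by (simp add: fps_deriv_power)
  have dR: "fps_deriv Rf = 3 * fps_deriv Q * Q^2 * Pf + Q^3 * fps_deriv Pf"
    unfolding RQ by (simp add: fps_deriv_power' algebra_simps)
  have dR2: "fps_deriv Rf = 3 * (- (2 * fps_X)) * Q^2 * Pf + Q^3 * (- (Pf * Y))"
    using dR dQ dP by simp
  show ?thesis unfolding dR2 unfolding RQ by (simp add: algebra_simps power3_eq_cube power2_eq_square)
qed



lemma Rf_split:
  "fps_of_poly (Rtp n) = fps_const (real n + 1) - fps_const (real n + 3) * fps_X^2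
     + fps_X^(2*n+4) * (fps_const (real n + 3) - fps_const (real n + 1) * fps_X^2)"
proof (rule fps_ext)
  fix k
  show "fps_nth (fps_of_poly (Rtp n)) k = fps_nth (fps_const (real n + 1) - fps_const (real n + 3) * fps_X^2
     + fps_X^(2*n+4) * (fps_const (real n + 3) - fps_const (real n + 1) * fps_X^2)) k"
    by (simp add: Rtp_coeff fps_X_power_mult_nth fps_X_power_nth algebra_simps) arith
qed

lemma power_sum:
  assumes c0: "c \<noteq> 0" and fac: "\<forall>y. gegenbauer2 n y = c * (\<Prod>j=1..n. (y - cos (z j)))"
    and m: "1 \<le> m" "m \<le> n + 2"
  shows "(\<Sum>j=1..n. cos (2 * real m * z j)) =
     ((real n + 3)/(real n + 1))^m - 3 - (if m = n + 2 then (real n + 2) * ((real n + 3)/(real n + 1)) else 0)"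
proof -
  define Y where "Y = (\<Sum>j=1..n. Sx (z j))"
  define Q where "Q = (1 - fps_X ^ 2 :: real fps)"
  define Rf where "Rf = fps_of_poly (Rtp n)"
  define W where "W = Q * Y + 6 * fps_X"
  define F where "F = fps_deriv Rf"
  define a where "a = (real n + 3)/(real n + 1)"
  define r where "r = (\<lambda>k. coeff (Rtp n) k)"
  have E: "Rf * W = - (Q * F)"
    unfolding W_def F_def Y_def Q_def Rf_def by (rule key_identity[OF c0 fac])
  have L1: "fps_nth (Rf * W) k = (real n + 1) * fps_nth W k - (if 2 \<le> k then (real n + 3) * fps_nth W (k-2) else 0)"
    if "k < 2*n+4" for k
  proof -
    have e: "Rf * W = fps_const (real n + 1) * W - fps_const (real n + 3) * (fps_X^2 * W)
       + fps_X^(2*n+4) * ((fps_const (real n + 3) - fps_const (real n + 1) * fps_X^2) * W)"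
      unfolding Rf_def Rf_split by (simp add: algebra_simps)
    show ?thesis using that unfolding e by (simp add: fps_X_power_mult_nth)
  qed
  have L2: "fps_nth (Q * F) k = fps_nth F k - (if 2 \<le> k then fps_nth F (k-2) else 0)" for k
  proof -
    have e: "Q * F = F - fps_X^2 * F" unfolding Q_def by (simp add: algebra_simps)
    show ?thesis unfolding e by (simp add: fps_X_power_mult_nth)
  qed
  have L2': "fps_nth F k = real (k+1) * r (k+1)" for k
    unfolding F_def Rf_def r_def by simp
  have L3: "fps_nth W k = fps_nth Y k - (if 2 \<le> k then fps_nth Y (k-2) else 0) + (if k = 1 then 6 else 0)" for k
  proof -
    have e: "W = Y - fps_X^2 * Y + 6 * fps_X" unfolding W_def Q_def by (simp add: algebra_simps)
    show ?thesis unfolding e by (simp add: fps_X_power_mult_nth fps_numeral_nth)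
  qed
  have rec: "(real n + 1) * fps_nth W k - (if 2 \<le> k then (real n + 3) * fps_nth W (k-2) else 0)
      = - (real (k+1) * r (k+1) - (if 2 \<le> k then real (k-1) * r (k-1) else 0))"
    if "k < 2*n+4" for k
  proof -
    have e: "fps_nth (Rf * W) k = - fps_nth (Q * F) k" unfolding E by simp
    show ?thesis
    proof (cases "2 \<le> k")
      case True
      have kk: "k - 2 + 1 = k - 1" using True by simp
      show ?thesis using e unfolding L1[OF that] L2 L2' kk using True by simp
    next
      case False
      show ?thesis using e unfolding L1[OF that] L2 L2' using False by simp
    qed
  qed
  have N0: "real n + 1 > 0" by simp
  have Na: "(real n + 1) * a = real n + 3" unfolding a_def using N0 by simp
  have a_rel: "(real n + 3) * a^j = (real n + 1) * a^(Suc j)" for j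
    by (simp only: power_Suc mult.assoc[symmetric] Na)
  define wc where "wc = (\<lambda>i. 2*a^(i+1) - (if 1 \<le> i then 2*a^i else 0) - (if i = n+1 then (2*real n+4)*a else 0))"
  have Wc: "fps_nth W (2*i+1) = wc i" if "i \<le> n+1" for i
    using that
  proof (induction i)
    case 0
    have "(real n + 1) * fps_nth W 1 = 2 * (real n + 3)"
      using rec[of 1] by (simp add: r_def Rtp_coeff)
    then have "fps_nth W 1 = 2 * a" unfolding a_def using N0 by (simp add: field_simps)
    then show ?case unfolding wc_def by simp
  next
    case (Suc i)
    have i: "i \<le> n" using Suc.prems by simp
    have IH: "fps_nth W (2*i+1) = wc i" using Suc.IH i by simp
    have R: "(real n + 1) * fps_nth W (2*i+3) - (real n + 3) * fps_nth W (2*i+1)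
        = - (real (2*i+4) * r (2*i+4) - real (2*i+2) * r (2*i+2))"
    proof -
      have lt: "2*i+3 < 2*n+4" using i by simp
      have ce: "(2::nat) \<le> 2*i+3" by simp
      have k1: "2*i+3+1 = 2*i+4" "2*i+3-1 = 2*i+2" "2*i+3-2 = 2*i+1" by simp_all
      show ?thesis using rec[OF lt] unfolding if_P[OF ce] k1 .
    qed
    have r1: "r (2*i+4) = (if i = n then real n + 3 else 0)" unfolding r_def Rtp_coeff using i by auto
    have r2: "r (2*i+2) = (if i = 0 then - (real n + 3) else 0)" unfolding r_def Rtp_coeff using i by auto
    have "(real n + 1) * fps_nth W (2*i+3) = (real n + 1) * wc (Suc i)"
    proof -
      have "(real n + 1) * fps_nth W (2*i+3) = (real n + 3) * wc i - real (2*i+4) * r (2*i+4) + real (2*i+2) * r (2*i+2)"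
        using R IH by simp
      also have "\<dots> = (real n + 1) * wc (Suc i)"
      proof -
        have ni: "i \<noteq> n + 1" using i by simp
        have w1: "wc i = 2*a^(i+1) - (if 1 \<le> i then 2*a^i else 0)" unfolding wc_def using ni by simp
        have w2: "wc (Suc i) = 2*a*a^(i+1) - 2*a^(i+1) - (if i = n then (2*real n+4)*a else 0)"
          unfolding wc_def by simp
        have An: "real n + 3 = (real n + 1) * a" using Na by simp
        show ?thesis unfolding w1 w2 r1 r2 An
          by (cases "i = 0"; cases "i = n") (simp_all add: algebra_simps)
      qed
      finally show ?thesis .
    qed
    then have "fps_nth W (2*i+3) = wc (Suc i)" using N0 by simp
    then show ?case by (simp add: numeral_3_eq_3)
  qed
  define uc where "uc = (\<lambda>i. 2*a^(i+1) - 6 - (if i = n+1 then (2*real n+4)*a else 0))"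
  have Yc: "fps_nth Y (2*i+1) = uc i" if "i \<le> n+1" for i
    using that
  proof (induction i)
    case 0
    then show ?case using L3[of 1] Wc[of 0] unfolding wc_def uc_def by simp
  next
    case (Suc i)
    have "fps_nth W (2*i+3) = fps_nth Y (2*i+3) - fps_nth Y (2*i+1)"
      using L3[of "2*i+3"] by (simp add: numeral_3_eq_3)
    moreover have "fps_nth W (2*i+3) = wc (Suc i)" using Wc[of "Suc i"] Suc.prems by (simp add: numeral_3_eq_3)
    moreover have "fps_nth Y (2*i+1) = uc i" using Suc by simp
    ultimately have "fps_nth Y (2*i+3) = wc (Suc i) + uc i" by simp
    also have "\<dots> = uc (Suc i)" unfolding wc_def uc_def using Suc.prems by auto
    finally show ?case by (simp add: numeral_3_eq_3)
  qed
  have mi: "2*(m-1)+1 = 2*m - 1" "m - 1 \<le> n+1" using m by auto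
  have "fps_nth Y (2*m - 1) = (\<Sum>j=1..n. 2 * cos (2 * real m * z j))"
  proof -
    have "real (Suc (2*m-1)) = 2 * real m" using m by simp
    then show ?thesis unfolding Y_def fps_sum_nth Sx_def by simp
  qed
  moreover have "fps_nth Y (2*m - 1) = uc (m-1)" using Yc[OF mi(2)] mi(1) by simp
  ultimately have "2 * (\<Sum>j=1..n. cos (2 * real m * z j)) = uc (m-1)" by (simp add: sum_distrib_left)
  moreover have "uc (m-1) = 2 * (a^m - 3 - (if m = n + 2 then (real n + 2) * a else 0))"
    unfolding uc_def using m by (auto simp: algebra_simps)
  ultimately show ?thesis unfolding a_def by simp
qed



lemma cos_const_integral:
  assumes "m \<ge> 1"
  shows "((\<lambda>t. cos (2 * real m * t) * K) has_integral 0) {0..pi}"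
proof -
  have "((\<lambda>t. cos (2 * real m * t) * K) has_integral
      (sin (2 * real m * pi) / (2 * real m) * K - sin (2 * real m * 0) / (2 * real m) * K)) {0..pi}"
    using assms
    by (intro fundamental_theorem_of_calculus)
       (auto intro!: derivative_eq_intros simp: has_real_derivative_iff_has_vector_derivative[symmetric])
  moreover have "sin (2 * real m * pi) = 0"
    using sin_npi[of "2*m"] by (simp add: mult.assoc)
  ultimately show ?thesis by simp
qed

theorem proposition2:
  fixes n m :: nat
  assumes "1 \<le> m" and "m \<le> n + 2"
  shows "((\<lambda>\<theta>. cos (2 * real m * \<theta>) * ln ((gegenbauer2 n (cos \<theta>))\<^sup>2)) has_integral
           (pi / real m * (3 - ((real n + 3) / (real n + 1)) ^ m)
            + pi * ((real n + 3) / (real n + 1)) * (if m = n + 2 then 1 else 0))) {0..pi}"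
proof -
  obtain z c where c0: "c \<noteq> 0" and zr: "\<forall>j\<in>{1..n}. 0 < z j \<and> z j < pi"
    and fac: "\<forall>y. gegenbauer2 n y = c * (\<Prod>j=1..n. (y - cos (z j)))"
    using gegen_factor[of n] by blast
  define a where "a = (real n + 3) / (real n + 1)"
  have ps: "(\<Sum>j=1..n. cos (2 * real m * z j)) = a^m - 3 - (if m = n + 2 then (real n + 2) * a else 0)"
    unfolding a_def by (rule power_sum[OF c0 fac assms])
  have each: "((\<lambda>t. cos (2 * real m * t) * ln ((cos t - cos (z j))^2)) has_integral
            (- pi * cos (2 * real m * z j) / real m)) {0..pi}" if "j \<in> {1..n}" for j
    using zr that assms(1) by (intro lemmaA) auto
  have sumI: "((\<lambda>t. \<Sum>j=1..n. cos (2 * real m * t) * ln ((cos t - cos (z j))^2)) has_integral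
            (\<Sum>j=1..n. - pi * cos (2 * real m * z j) / real m)) {0..pi}"
    by (rule has_integral_sum[OF finite_atLeastAtMost each])
  have tot: "((\<lambda>t. cos (2 * real m * t) * ln (c^2) + (\<Sum>j=1..n. cos (2 * real m * t) * ln ((cos t - cos (z j))^2)))
      has_integral (0 + (\<Sum>j=1..n. - pi * cos (2 * real m * z j) / real m))) {0..pi}"
    by (rule has_integral_add[OF cos_const_integral[OF assms(1)] sumI])
  have val: "0 + (\<Sum>j=1..n. - pi * cos (2 * real m * z j) / real m) =
      pi / real m * (3 - ((real n + 3) / (real n + 1)) ^ m)
            + pi * ((real n + 3) / (real n + 1)) * (if m = n + 2 then 1 else 0)"
  proof -
    have "(\<Sum>j=1..n. - pi * cos (2 * real m * z j) / real m) = - pi / real m * (\<Sum>j=1..n. cos (2 * real m * z j))"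
      by (simp add: sum_distrib_left sum_divide_distrib)
    also have "\<dots> = - pi / real m * (a^m - 3 - (if m = n + 2 then (real n + 2) * a else 0))"
      unfolding ps ..
    also have "\<dots> = pi / real m * (3 - a ^ m) + pi * a * (if m = n + 2 then 1 else 0)"
      using assms(1) by (auto simp: field_simps)
    finally show ?thesis unfolding a_def by simp
  qed
  show ?thesis
  proof (rule has_integral_spike_finite[where S="(\<lambda>j. z j) ` {1..n}", OF _ _ tot[unfolded val]])
    show "finite ((\<lambda>j. z j) ` {1..n})" by simp
    fix t assume t: "t \<in> {0..pi} - (\<lambda>j. z j) ` {1..n}"
    have nz: "cos t - cos (z j) \<noteq> 0" if "j \<in> {1..n}" for j
    proof
      assume "cos t - cos (z j) = 0"
      then have "cos t = cos (z j)" by simp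
      moreover have "0 \<le> t" "t \<le> pi" using t by auto
      moreover have "0 < z j \<and> z j < pi" using zr that by blast
      then have "0 \<le> z j" "z j \<le> pi" by auto
      ultimately have "t = z j" using cos_inj_pi by blast
      then show False using t that by auto
    qed
    have eqG: "(gegenbauer2 n (cos t))\<^sup>2 = c^2 * (\<Prod>j=1..n. (cos t - cos (z j))^2)"
      using fac by (simp add: power_mult_distrib prod_power_distrib)
    then have "ln ((gegenbauer2 n (cos t))\<^sup>2) = ln (c^2) + (\<Sum>j=1..n. ln ((cos t - cos (z j))^2))"
    proof -
      have lp: "ln (\<Prod>j=1..n. (cos t - cos (z j))^2) = (\<Sum>j=1..n. ln ((cos t - cos (z j))^2))"
        by (rule ln_prod) (use nz in auto)
      have pp: "(\<Prod>j=1..n. (cos t - cos (z j))^2) > 0"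
        by (rule prod_pos) (use nz in auto)
      have "c^2 > 0" using c0 by simp
      have "ln ((gegenbauer2 n (cos t))\<^sup>2) = ln (c^2 * (\<Prod>j=1..n. (cos t - cos (z j))^2))"
        unfolding eqG ..
      also have "\<dots> = ln (c^2) + ln (\<Prod>j=1..n. (cos t - cos (z j))^2)"
        by (rule ln_mult_pos) fact+
      finally show ?thesis unfolding lp .
    qed
    then show "cos (2 * real m * t) * ln ((gegenbauer2 n (cos t))\<^sup>2) =
      cos (2 * real m * t) * ln (c^2) + (\<Sum>j=1..n. cos (2 * real m * t) * ln ((cos t - cos (z j))^2))"
      by (simp add: algebra_simps sum_distrib_left)
  qed
qed

end
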